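(* If an atomic flow $A$ is cycle-free and $A\to_{\mathsf w}^\star B$, then $B$ is cycle-free.
   Context: An atomic flow is a tuple $(V,E,\eta,up,lo)$: finite sets of vertices and edges, a labelling of vertices by interaction, cut, weakening, coweakening, contraction or cocontraction, and maps $up:E\to V\cup\{\top\}$, $lo:E\to V\cup\{\bot\}$. Upper edges of $\nu$: $lo(\epsilon)=\nu$; lower edges: $up(\epsilon)=\nu$. (Upper, lower) edge numbers: $(0,2)$ interaction, $(2,0)$ cut, $(0,1)$ weakening, $(1,0)$ coweakening, $(2,1)$ contraction, $(1,2)$ cocontraction; no directed cycles; there is $\pi:E\to\{+,-\}$ giving all edges of a (co)contraction the same sign and the two edges of an interaction/cut different signs. A path from $\nu$ to $\nu'$ is a sequence of edges $\epsilon_1,\dots,\epsilon_h$ with $lo(\epsilon_i)=up(\epsilon_{i+1})$, $up(\epsilon_1)=\nu$, $lo(\epsilon_h)=\nu'$; its reversal is a path from $\nu'$ to $\nu$. An $\mathsf{ai}$-path from $\nu$ to $\nu'$ is either a path from $\nu$ to $\nu'$ or a sequence $\epsilon_1,\dots,\epsilon_k,\epsilon_{k+1},\dots,\epsilon_h$ with $\epsilon_k\neq\epsilon_{k+1}$ such that, for some interaction or cut vertex $\nu''$, $\epsilon_1,\dots,\epsilon_k$ is an $\mathsf{ai}$-path from $\nu$ to $\nu''$ and $\epsilon_{k+1},\dots,\epsilon_h$ is an $\mathsf{ai}$-path from $\nu''$ to $\nu'$. An $\mathsf{ai}$-cycle is an $\mathsf{ai}$-path from a vertex to itself in which no edge appears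 twice. A flow is cycle-free if it has no $\mathsf{ai}$-cycle. $\to_{\mathsf w}^\star$ is the reflexive-transitive closure of $\to_{\mathsf w}$, where $A\to_{\mathsf w}B$ means $B$ results from $A$ by one application of one of these subgraph replacements: (i) a weakening whose lower edge is an upper edge of a contraction: delete both, merging the contraction's other upper edge and its lower edge into one edge; (ii) a coweakening whose upper edge is a lower edge of a cocontraction: delete both, merging the cocontraction's upper edge and other lower edge; (iii) a weakening whose lower edge is an upper edge of a cut: delete both, the cut's other upper edge becoming the upper edge of a new coweakening; (iv) an interaction one of whose lower edges is the upper edge of a coweakening: delete both, the other lower edge becoming the lower edge of a new weakening; (v) an edge from a weakening to a coweakening: delete it and both vertices; (vi) a weakening whose lower edge is the upper edge of a cocontraction: replace by two new weakenings whose lower edges are the cocontraction's lower edges; (vii) a coweakening whose upper edge is the lower edge of a contraction: replace by two new coweakenings whose upper edges are the contraction's upper edges. *)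

theory Defs
  imports Main
begin

datatype kind = Interaction | Cut | Weakening | Coweakening | Contraction | Cocontraction

(* up e = None means up(e) = top; lo e = None means lo(e) = bot *)
record ('v, 'e) flow =
  verts :: "'v set"
  edges :: "'e set"
  lab   :: "'v \<Rightarrow> kind"
  up    :: "'e \<Rightarrow> 'v option"
  lo    :: "'e \<Rightarrow> 'v option"

definition upper_edges :: "('v,'e) flow \<Rightarrow> 'v \<Rightarrow> 'e set" where
  "upper_edges F v = {e \<in> edges F. lo F e = Some v}"

definition lower_edges :: "('v,'e) flow \<Rightarrow> 'v \<Rightarrow> 'e set" where
  "lower_edges F v = {e \<in> edges F. up F e = Some v}"

fun n_upper :: "kind \<Rightarrow> nat" where
  "n_upper Interaction = 0" | "n_upper Cut = 2" | "n_upper Weakening = 0"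
| "n_upper Coweakening = 1" | "n_upper Contraction = 2" | "n_upper Cocontraction = 1"

fun n_lower :: "kind \<Rightarrow> nat" where
  "n_lower Interaction = 2" | "n_lower Cut = 0" | "n_lower Weakening = 1"
| "n_lower Coweakening = 0" | "n_lower Contraction = 1" | "n_lower Cocontraction = 2"

definition dpath :: "('v,'e) flow \<Rightarrow> 'v \<Rightarrow> 'e list \<Rightarrow> 'v \<Rightarrow> bool" where
  "dpath F v es v' \<longleftrightarrow> es \<noteq> [] \<and> set es \<subseteq> edges F \<and>
     up F (hd es) = Some v \<and> lo F (last es) = Some v' \<and>
     (\<forall>i. Suc i < length es \<longrightarrow> lo F (es ! i) \<noteq> None \<and> lo F (es ! i) = up F (es ! Suc i))"

definition is_path :: "('v,'e) flow \<Rightarrow> 'v \<Rightarrow> 'e list \<Rightarrow> 'v \<Rightarrow> bool" where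
  "is_path F v es v' \<longleftrightarrow> dpath F v es v' \<or> dpath F v' (rev es) v"

inductive ai_path :: "('v,'e) flow \<Rightarrow> 'v \<Rightarrow> 'e list \<Rightarrow> 'v \<Rightarrow> bool" for F where
  base: "is_path F v es v' \<Longrightarrow> ai_path F v es v'"
| join: "\<lbrakk> ai_path F v xs w; ai_path F w ys v'; w \<in> verts F;
           lab F w = Interaction \<or> lab F w = Cut; last xs \<noteq> hd ys \<rbrakk>
         \<Longrightarrow> ai_path F v (xs @ ys) v'"

definition ai_cycle :: "('v,'e) flow \<Rightarrow> 'v \<Rightarrow> 'e list \<Rightarrow> bool" where
  "ai_cycle F v es \<longleftrightarrow> ai_path F v es v \<and> distinct es"

definition cycle_free :: "('v,'e) flow \<Rightarrow> bool" where
  "cycle_free F \<longleftrightarrow> \<not> (\<exists>v es. ai_cycle F v es)"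

definition atomic_flow :: "('v,'e) flow \<Rightarrow> bool" where
  "atomic_flow F \<longleftrightarrow>
     finite (verts F) \<and> finite (edges F) \<and>
     (\<forall>e \<in> edges F. (\<forall>v. up F e = Some v \<longrightarrow> v \<in> verts F) \<and>
                     (\<forall>v. lo F e = Some v \<longrightarrow> v \<in> verts F)) \<and>
     (\<forall>v \<in> verts F. card (upper_edges F v) = n_upper (lab F v) \<and>
                     card (lower_edges F v) = n_lower (lab F v)) \<and>
     \<not> (\<exists>v es. dpath F v es v) \<and>
     (\<exists>\<pi> :: 'e \<Rightarrow> bool.
        (\<forall>v \<in> verts F. (lab F v = Contraction \<or> lab F v = Cocontraction) \<longrightarrow>
            (\<forall>e1 \<in> upper_edges F v \<union> lower_edges F v.
               \<forall>e2 \<in> upper_edges F v \<union> lower_edges F v. \<pi> e1 = \<pi> e2)) \<and>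
        (\<forall>v \<in> verts F. lab F v = Interaction \<longrightarrow>
            (\<forall>e1 \<in> lower_edges F v. \<forall>e2 \<in> lower_edges F v. e1 \<noteq> e2 \<longrightarrow> \<pi> e1 \<noteq> \<pi> e2)) \<and>
        (\<forall>v \<in> verts F. lab F v = Cut \<longrightarrow>
            (\<forall>e1 \<in> upper_edges F v. \<forall>e2 \<in> upper_edges F v. e1 \<noteq> e2 \<longrightarrow> \<pi> e1 \<noteq> \<pi> e2)))"

text \<open>One weakening-reduction step.  Newly created vertices/merged edges reuse names of
  deleted ones (the result is determined up to isomorphism).\<close>
inductive w_step :: "('v,'e) flow \<Rightarrow> ('v,'e) flow \<Rightarrow> bool" where
  w_contr: "\<lbrakk> w \<in> verts A; lab A w = Weakening; c \<in> verts A; lab A c = Contraction;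
      e \<in> edges A; up A e = Some w; lo A e = Some c;
      e' \<in> edges A; e' \<noteq> e; lo A e' = Some c;
      f \<in> edges A; up A f = Some c \<rbrakk>
   \<Longrightarrow> w_step A (A\<lparr> verts := verts A - {w, c}, edges := edges A - {e, f},
                    lo := (lo A)(e' := lo A f) \<rparr>)"
| cow_cocontr: "\<lbrakk> k \<in> verts A; lab A k = Coweakening; d \<in> verts A; lab A d = Cocontraction;
      e \<in> edges A; up A e = Some d; lo A e = Some k;
      e' \<in> edges A; e' \<noteq> e; up A e' = Some d;
      g \<in> edges A; lo A g = Some d \<rbrakk>
   \<Longrightarrow> w_step A (A\<lparr> verts := verts A - {k, d}, edges := edges A - {e, e'},
                    lo := (lo A)(g := lo A e') \<rparr>)"
| w_cut: "\<lbrakk> w \<in> verts A; lab A w = Weakening; c \<in> verts A; lab A c = Cut;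
      e \<in> edges A; up A e = Some w; lo A e = Some c \<rbrakk>
   \<Longrightarrow> w_step A (A\<lparr> verts := verts A - {w}, edges := edges A - {e},
                    lab := (lab A)(c := Coweakening) \<rparr>)"
| i_cow: "\<lbrakk> i \<in> verts A; lab A i = Interaction; k \<in> verts A; lab A k = Coweakening;
      e \<in> edges A; up A e = Some i; lo A e = Some k \<rbrakk>
   \<Longrightarrow> w_step A (A\<lparr> verts := verts A - {k}, edges := edges A - {e},
                    lab := (lab A)(i := Weakening) \<rparr>)"
| w_cow: "\<lbrakk> w \<in> verts A; lab A w = Weakening; k \<in> verts A; lab A k = Coweakening;
      e \<in> edges A; up A e = Some w; lo A e = Some k \<rbrakk>
   \<Longrightarrow> w_step A (A\<lparr> verts := verts A - {w, k}, edges := edges A - {e} \<rparr>)"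
| w_cocontr: "\<lbrakk> w \<in> verts A; lab A w = Weakening; d \<in> verts A; lab A d = Cocontraction;
      e \<in> edges A; up A e = Some w; lo A e = Some d;
      f1 \<in> edges A; f2 \<in> edges A; f1 \<noteq> f2; up A f1 = Some d; up A f2 = Some d \<rbrakk>
   \<Longrightarrow> w_step A (A\<lparr> edges := edges A - {e},
                    lab := (lab A)(d := Weakening), up := (up A)(f1 := Some w) \<rparr>)"
| contr_cow: "\<lbrakk> k \<in> verts A; lab A k = Coweakening; c \<in> verts A; lab A c = Contraction;
      e \<in> edges A; up A e = Some c; lo A e = Some k;
      g1 \<in> edges A; g2 \<in> edges A; g1 \<noteq> g2; lo A g1 = Some c; lo A g2 = Some c \<rbrakk>
   \<Longrightarrow> w_step A (A\<lparr> edges := edges A - {e},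
                    lab := (lab A)(c := Coweakening), lo := (lo A)(g1 := Some k) \<rparr>)"

end

theory Submission
  imports Defs
begin

lemma dpath_single: "dpath F v [x] v' \<longleftrightarrow> x \<in> edges F \<and> up F x = Some v \<and> lo F x = Some v'"
  by (auto simp: dpath_def)

lemma dpath_two: "dpath F v [x,y] v' \<longleftrightarrow> x \<in> edges F \<and> y \<in> edges F \<and> up F x = Some v
   \<and> lo F x \<noteq> None \<and> lo F x = up F y \<and> lo F y = Some v'"
proof -
  have "(\<forall>i. Suc i < length [x,y] \<longrightarrow> P i) \<longleftrightarrow> P 0" for P by (auto simp: less_Suc_eq)
  then show ?thesis unfolding dpath_def by auto
qed

lemma dpath_append:
  assumes "dpath F v xs u" "dpath F u ys v'"
  shows "dpath F v (xs @ ys) v'"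
proof -
  have "\<forall>i. Suc i < length (xs@ys) \<longrightarrow> lo F ((xs@ys) ! i) \<noteq> None \<and> lo F ((xs@ys) ! i) = up F ((xs@ys) ! Suc i)"
  proof (intro allI impI)
    fix i assume i: "Suc i < length (xs@ys)"
    consider "Suc i < length xs" | "Suc i = length xs" | "Suc i > length xs" by linarith
    then show "lo F ((xs@ys) ! i) \<noteq> None \<and> lo F ((xs@ys) ! i) = up F ((xs@ys) ! Suc i)"
    proof cases
      case 1
      then have "(xs@ys)!i = xs!i" "(xs@ys)!Suc i = xs!Suc i" by (auto simp: nth_append)
      then show ?thesis using assms(1) 1 unfolding dpath_def by metis
    next
      case 2
      then have "i = length xs - 1" by simp
      then have "(xs@ys)!i = last xs" "(xs@ys)! Suc i = hd ys" using assms 2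
        by (auto simp: dpath_def nth_append last_conv_nth hd_conv_nth)
      then show ?thesis using assms by (auto simp: dpath_def)
    next
      case 3
      then obtain j where j: "i = length xs + j" by (metis less_Suc_eq_le le_Suc_ex)
      have "Suc j < length ys" using i j by simp
      moreover have "(xs@ys)!i = ys!j" "(xs@ys)!Suc i = ys!Suc j" using j by (auto simp: nth_append)
      ultimately show ?thesis using assms(2) unfolding dpath_def by metis
    qed
  qed
  moreover have "xs@ys \<noteq> []" "set (xs@ys) \<subseteq> edges F" "up F (hd (xs@ys)) = Some v"
    "lo F (last (xs@ys)) = Some v'" using assms by (auto simp: dpath_def)
  ultimately show ?thesis unfolding dpath_def by blast
qed

lemma dpath_Cons:
  assumes "dpath F v (x # xs) v'" "xs \<noteq> []"
  shows "\<exists>u. lo F x = Some u \<and> dpath F v [x] u \<and> dpath F u xs v'"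
proof -
  have "Suc 0 < length (x#xs)" using assms(2) by simp
  then have "lo F ((x#xs)!0) \<noteq> None \<and> lo F ((x#xs)!0) = up F ((x#xs)!Suc 0)"
    using assms(1) unfolding dpath_def by blast
  then have 0: "lo F x \<noteq> None \<and> lo F x = up F (hd xs)"
    using assms(2) by (metis hd_conv_nth nth_Cons_0 nth_Cons_Suc)
  then obtain u where u: "lo F x = Some u" by blast
  have "dpath F u xs v'"
    unfolding dpath_def
  proof (intro conjI allI impI)
    show "xs \<noteq> []" by fact
    show "set xs \<subseteq> edges F" using assms by (auto simp: dpath_def)
    show "up F (hd xs) = Some u" using 0 u by simp
    show "lo F (last xs) = Some v'" using assms by (auto simp: dpath_def)
    fix i assume "Suc i < length xs"
    then have "Suc (Suc i) < length (x#xs)" by simp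
    then show "lo F (xs ! i) \<noteq> None" "lo F (xs ! i) = up F (xs ! Suc i)"
      using assms(1) unfolding dpath_def by (metis nth_Cons_Suc)+
  qed
  moreover have "dpath F v [x] u" using assms(1) u by (auto simp: dpath_def)
  ultimately show ?thesis using u by blast
qed

definition sim_ok :: "('v,'e) flow \<Rightarrow> ('v,'e) flow \<Rightarrow> ('e \<Rightarrow> 'e list) \<Rightarrow> bool" where
  "sim_ok A B \<sigma> \<longleftrightarrow> verts B \<subseteq> verts A \<and>
    (\<forall>v\<in>verts B. (lab B v = Interaction \<or> lab B v = Cut) \<longrightarrow> (lab A v = Interaction \<or> lab A v = Cut)) \<and>
    (\<forall>x\<in>edges B. \<forall>u u'. up B x = Some u \<longrightarrow> lo B x = Some u' \<longrightarrow> dpath A u (\<sigma> x) u') \<and>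
    (\<forall>x\<in>edges B. \<sigma> x \<noteq> [] \<and> distinct (\<sigma> x)) \<and>
    (\<forall>x\<in>edges B. \<forall>y\<in>edges B. x \<noteq> y \<longrightarrow> set (\<sigma> x) \<inter> set (\<sigma> y) = {})"

lemma sim_okD:
  assumes "sim_ok A B \<sigma>"
  shows "verts B \<subseteq> verts A"
    "\<And>v. v \<in> verts B \<Longrightarrow> lab B v = Interaction \<or> lab B v = Cut \<Longrightarrow> lab A v = Interaction \<or> lab A v = Cut"
    "\<And>x. x \<in> edges B \<Longrightarrow> \<sigma> x \<noteq> []"
    "\<And>x. x \<in> edges B \<Longrightarrow> distinct (\<sigma> x)"
    "\<And>x y. x \<in> edges B \<Longrightarrow> y \<in> edges B \<Longrightarrow> x \<noteq> y \<Longrightarrow> set (\<sigma> x) \<inter> set (\<sigma> y) = {}"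
  using assms unfolding sim_ok_def by (blast, metis, blast, blast, blast)

lemma sim_dpath:
  assumes "sim_ok A B \<sigma>" "dpath B v es v'"
  shows "dpath A v (concat (map \<sigma> es)) v'"
  using assms(2)
proof (induction es arbitrary: v)
  case Nil then show ?case by (simp add: dpath_def)
next
  case (Cons x xs)
  show ?case
  proof (cases "xs = []")
    case True
    then show ?thesis using Cons.prems assms(1) by (auto simp: sim_ok_def dpath_single)
  next
    case False
    obtain u where u: "lo B x = Some u" "dpath B v [x] u" "dpath B u xs v'"
      using dpath_Cons[OF Cons.prems False] by auto
    have "dpath A v (\<sigma> x) u" using u assms(1) by (auto simp: sim_ok_def dpath_single)
    then show ?thesis using Cons.IH[OF u(3)] dpath_append by fastforce
  qed
qed

lemma ai_path_ne: "ai_path F v es v' \<Longrightarrow> es \<noteq> [] \<and> set es \<subseteq> edges F"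
  by (induction rule: ai_path.induct) (auto simp: is_path_def dpath_def)

definition R :: "('e \<Rightarrow> 'e list) \<Rightarrow> 'e \<Rightarrow> 'e list \<Rightarrow> bool" where
  "R \<sigma> x l \<longleftrightarrow> l = \<sigma> x \<or> l = rev (\<sigma> x)"

lemma R_set: "list_all2 (R \<sigma>) es ls \<Longrightarrow> set (concat ls) = (\<Union>x\<in>set es. set (\<sigma> x))"
  by (induction rule: list_all2_induct) (auto simp: R_def)

lemma R_hd: "list_all2 (R \<sigma>) es ls \<Longrightarrow> es \<noteq> [] \<Longrightarrow> \<sigma> (hd es) \<noteq> [] \<Longrightarrow>
   hd (concat ls) \<in> set (\<sigma> (hd es))"
  by (induction rule: list_all2_induct) (auto simp: R_def hd_rev)

lemma R_last: "list_all2 (R \<sigma>) es ls \<Longrightarrow> es \<noteq> [] \<Longrightarrow> (\<forall>x\<in>set es. \<sigma> x \<noteq> []) \<Longrightarrow>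
   last (concat ls) \<in> set (\<sigma> (last es))"
proof (induction rule: list_all2_induct)
  case Nil then show ?case by simp
next
  case (Cons x es l ls)
  show ?case
  proof (cases "es = []")
    case True then show ?thesis using Cons by (auto simp: R_def last_rev)
  next
    case False
    then have "concat ls \<noteq> []" using Cons R_set[OF Cons(2)]
      by (metis (no_types, lifting) UN_I empty_iff empty_set list.set_sel(1) set_empty2 list.set_intros(2))
    then show ?thesis using Cons False by auto
  qed
qed

lemma R_distinct: "list_all2 (R \<sigma>) es ls \<Longrightarrow> distinct es \<Longrightarrow> (\<forall>x\<in>set es. distinct (\<sigma> x)) \<Longrightarrow>
  (\<forall>x\<in>set es. \<forall>y\<in>set es. x \<noteq> y \<longrightarrow> set (\<sigma> x) \<inter> set (\<sigma> y) = {}) \<Longrightarrow> distinct (concat ls)"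
proof (induction rule: list_all2_induct)
  case Nil then show ?case by simp
next
  case (Cons x es l ls)
  have sl: "set l = set (\<sigma> x)" using Cons(1) by (auto simp: R_def)
  have "set l \<inter> set (concat ls) = {}"
  proof (rule ccontr)
    assume "set l \<inter> set (concat ls) \<noteq> {}"
    then obtain z y where "z \<in> set (\<sigma> x)" "y \<in> set es" "z \<in> set (\<sigma> y)"
      using sl R_set[OF Cons(2)] by auto
    moreover have "x \<noteq> y" using Cons.prems \<open>y \<in> set es\<close> by auto
    ultimately show False using Cons.prems(3) by auto
  qed
  moreover have "distinct l" using Cons by (auto simp: R_def)
  ultimately show ?case using Cons by auto
qed

lemma sim_ai:
  assumes "sim_ok A B \<sigma>" "ai_path B v es v'"
  shows "\<exists>ls. list_all2 (R \<sigma>) es ls \<and> ai_path A v (concat ls) v'"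
  using assms(2)
proof (induction rule: ai_path.induct)
  case (base v es v')
  show ?case
  proof (cases "dpath B v es v'")
    case True
    have "list_all2 (R \<sigma>) es (map \<sigma> es)" by (simp add: list_all2_conv_all_nth R_def)
    moreover have "ai_path A v (concat (map \<sigma> es)) v'"
      by (rule ai_path.base) (simp add: is_path_def sim_dpath[OF assms(1) True])
    ultimately show ?thesis by blast
  next
    case False
    then have d: "dpath B v' (rev es) v" using base by (simp add: is_path_def)
    have "list_all2 (R \<sigma>) es (map (rev \<circ> \<sigma>) es)" by (simp add: list_all2_conv_all_nth R_def)
    moreover have "rev (concat (map (rev \<circ> \<sigma>) es)) = concat (map \<sigma> (rev es))"
      by (simp add: rev_concat rev_map comp_def)
    moreover have "ai_path A v (concat (map (rev \<circ> \<sigma>) es)) v'"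
      by (rule ai_path.base) (simp only: is_path_def calculation(2) sim_dpath[OF assms(1) d] simp_thms)
    ultimately show ?thesis by blast
  qed
next
  case (join v xs w ys v')
  obtain l1 where l1: "list_all2 (R \<sigma>) xs l1" "ai_path A v (concat l1) w" using join.IH(1) by blast
  obtain l2 where l2: "list_all2 (R \<sigma>) ys l2" "ai_path A w (concat l2) v'" using join.IH(2) by blast
  have ne: "xs \<noteq> []" "set xs \<subseteq> edges B" "ys \<noteq> []" "set ys \<subseteq> edges B"
    using ai_path_ne[OF join.hyps(1)] ai_path_ne[OF join.hyps(2)] by auto
  have le: "last xs \<in> edges B" "hd ys \<in> edges B" using ne by auto
  have "\<forall>x\<in>set xs. \<sigma> x \<noteq> []" using sim_okD(3)[OF assms(1)] ne(2) by auto
  then have a: "last (concat l1) \<in> set (\<sigma> (last xs))" using R_last[OF l1(1) ne(1)] by simp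
  have "\<sigma> (hd ys) \<noteq> []" using sim_okD(3)[OF assms(1) le(2)] .
  then have b: "hd (concat l2) \<in> set (\<sigma> (hd ys))" using R_hd[OF l2(1) ne(3)] by simp
  have "set (\<sigma> (last xs)) \<inter> set (\<sigma> (hd ys)) = {}" using sim_okD(5)[OF assms(1) le join.hyps(5)] .
  then have nl: "last (concat l1) \<noteq> hd (concat l2)" using a b disjoint_iff by metis
  have wv: "w \<in> verts A" using sim_okD(1)[OF assms(1)] join.hyps(3) by auto
  have wl: "lab A w = Interaction \<or> lab A w = Cut"
    using sim_okD(2)[OF assms(1) join.hyps(3,4)] .
  have "ai_path A v (concat l1 @ concat l2) v'"
    by (rule ai_path.join[OF l1(2) l2(2) wv wl nl])
  moreover have "list_all2 (R \<sigma>) (xs @ ys) (l1 @ l2)" using l1(1) l2(1) by (rule list_all2_appendI)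
  ultimately show ?case by (metis concat_append)
qed

lemma sim_cycle_free:
  assumes "sim_ok A B \<sigma>" "cycle_free A"
  shows "cycle_free B"
proof -
  { fix v es assume c: "ai_cycle B v es"
    then have "ai_path B v es v" by (simp add: ai_cycle_def)
    then obtain ls where ls: "list_all2 (R \<sigma>) es ls" "ai_path A v (concat ls) v"
      using sim_ai[OF assms(1)] by blast
    have "set es \<subseteq> edges B" using ai_path_ne[OF \<open>ai_path B v es v\<close>] by blast
    moreover have "distinct es" using c by (simp add: ai_cycle_def)
    moreover have "\<forall>x\<in>edges B. distinct (\<sigma> x)"
      "\<forall>x\<in>edges B. \<forall>y\<in>edges B. x \<noteq> y \<longrightarrow> set (\<sigma> x) \<inter> set (\<sigma> y) = {}"
      using assms(1) unfolding sim_ok_def by blast+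
    ultimately have "distinct (concat ls)" using R_distinct[OF ls(1)] by (meson subsetD)
    then have "ai_cycle A v (concat ls)" using ls(2) by (simp add: ai_cycle_def)
    then have False using assms(2) unfolding cycle_free_def by blast }
  then show ?thesis by (auto simp: cycle_free_def)
qed

lemma step_sim: "w_step A B \<Longrightarrow> \<exists>\<sigma>. sim_ok A B \<sigma>"
proof (induction rule: w_step.induct)
  case (w_contr w A c e e' f)
  show ?case
    by (rule exI[of _ "\<lambda>x. if x = e' then [e', f] else [x]"])
       (insert w_contr, auto simp: sim_ok_def dpath_single dpath_two)
next
  case (cow_cocontr k A d e e' g)
  show ?case
    by (rule exI[of _ "\<lambda>x. if x = g then [g, e'] else [x]"])
       (insert cow_cocontr, auto simp: sim_ok_def dpath_single dpath_two)
next
  case (w_cut w A c e)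
  show ?case
    by (rule exI[of _ "\<lambda>x. [x]"]) (insert w_cut, auto simp: sim_ok_def dpath_single)
next
  case (i_cow i A k e)
  show ?case
    by (rule exI[of _ "\<lambda>x. [x]"]) (insert i_cow, auto simp: sim_ok_def dpath_single)
next
  case (w_cow w A k e)
  show ?case
    by (rule exI[of _ "\<lambda>x. [x]"]) (insert w_cow, auto simp: sim_ok_def dpath_single)
next
  case (w_cocontr w A d e f1 f2)
  show ?case
    by (rule exI[of _ "\<lambda>x. if x = f1 then [e, f1] else [x]"])
       (insert w_cocontr, auto simp: sim_ok_def dpath_single dpath_two)
next
  case (contr_cow k A c e g1 g2)
  show ?case
    by (rule exI[of _ "\<lambda>x. if x = g1 then [g1, e] else [x]"])
       (insert contr_cow, auto simp: sim_ok_def dpath_single dpath_two)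
qed

theorem proposition4p14:
  fixes A B :: "('v, 'e) flow"
  assumes "atomic_flow A"
    and "cycle_free A"
    and "w_step\<^sup>*\<^sup>* A B"
  shows "cycle_free B"
  using assms(3,2)
proof (induction rule: rtranclp_induct)
  case base then show ?case .
next
  case (step y z)
  then show ?case using step_sim sim_cycle_free by blast
qed

end
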